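(* Let $w\in\{a,b\}^*$ (with $a\neq b$) satisfy $l(w)\ge 9$. Then there exists an element of $\mathtt{BR}(w)$ that is not rich.
   Context: For a word $w=w_1\cdots w_n$, $w^R=w_n\cdots w_1$; $w$ is a palindrome if $w=w^R$; a factor of $w$ is a word $u$ with $w=puq$. A word $w$ is rich if the number of distinct nonempty palindromic factors of $w$ equals $|w|$. The block reversal of a nonempty word $w$ is $\mathtt{BR}(w)=\{B_t\cdots B_1 : w=B_1\cdots B_t,\ t\ge1,\ \text{each } B_i \text{ nonempty}\}$. Every nonempty word has a unique run-length encoding $w=c_1^{n_1}\cdots c_k^{n_k}$ with letters $c_i\neq c_{i+1}$ and $n_i\ge1$; $l(w)=k$ is the length of its run sequence. *)

theory Defs
  imports Main "HOL-Library.Sublist"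
begin

text \<open>Words are lists. A factor of w is a contiguous sublist (Sublist.sublist).\<close>

definition pal_factors :: "'a list \<Rightarrow> 'a list set" where
  "pal_factors w = {u. u \<noteq> [] \<and> sublist u w \<and> rev u = u}"

definition rich :: "'a list \<Rightarrow> bool" where
  "rich w \<longleftrightarrow> card (pal_factors w) = length w"

definition block_reversal :: "'a list \<Rightarrow> 'a list set" where
  "block_reversal w = {concat (rev Bs) | Bs. Bs \<noteq> [] \<and> concat Bs = w \<and> (\<forall>B \<in> set Bs. B \<noteq> [])}"

definition run_length :: "'a list \<Rightarrow> nat" where
  "run_length w = length (remdups_adj w)"

end

theory Submission
  imports Defs
begin

lemma pal_finite: "finite (pal_factors w)"
proof -
  have "pal_factors w \<subseteq> {u. set u \<subseteq> set w \<and> length u \<le> length w}"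
    by (auto simp: pal_factors_def dest: set_mono_sublist sublist_length_le)
  moreover have "finite {u. set u \<subseteq> set w \<and> length u \<le> length w}"
    by (rule finite_lists_length_le) simp
  ultimately show ?thesis by (rule finite_subset)
qed

lemma pal_rev: "pal_factors (rev w) = pal_factors w"
  unfolding pal_factors_def
  by (metis sublist_rev_right)

lemma pal_nil: "pal_factors [] = {}"
  by (auto simp: pal_factors_def)

lemma new_pal_unique:
  assumes p: "p \<in> pal_factors (u @ [c]) - pal_factors u"
    and q: "q \<in> pal_factors (u @ [c]) - pal_factors u"
    and le: "length p \<le> length q"
  shows "p = q"
proof -
  have sp: "suffix p (u@[c])" using p by (auto simp: pal_factors_def sublist_snoc)
  have sq: "suffix q (u@[c])" using q by (auto simp: pal_factors_def sublist_snoc)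
  have psq: "suffix p q" using sp sq le suffix_length_suffix by blast
  have rq: "rev q = q" and rp: "rev p = p" and pn: "p \<noteq> []" and qn: "q \<noteq> []"
    using p q by (auto simp: pal_factors_def)
  have ppq: "prefix p q" using psq rq rp by (metis suffix_to_prefix)
  show ?thesis
  proof (rule ccontr)
    assume "p \<noteq> q"
    then have "length p < length q" using le psq
      by (auto simp: suffix_def)
    from sq qn obtain q' where q': "q = q' @ [c]" "suffix q' u"
      by (auto simp: suffix_snoc)
    have "prefix p q'" using ppq q' \<open>length p < length q\<close>
      using prefix_snoc[of p q' c] by auto
    then have "sublist p u" using q'(2)
      by (meson prefix_imp_sublist suffix_imp_sublist sublist_order.dual_order.trans)
    then show False using p by (auto simp: pal_factors_def)
  qed
qed

lemma card_snoc: "card (pal_factors (u @ [c])) \<le> Suc (card (pal_factors u))"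
proof -
  let ?N = "pal_factors (u @ [c]) - pal_factors u"
  have sub: "pal_factors u \<subseteq> pal_factors (u @ [c])"
    by (auto simp: pal_factors_def intro: sublist_order.order_trans)
  have fin: "finite ?N" using pal_finite by blast
  have "\<forall>p\<in>?N. \<forall>q\<in>?N. p = q"
      by (metis nat_le_linear new_pal_unique)
  then have "card ?N \<le> 1" using card_le_Suc0_iff_eq[OF fin] by simp
  moreover have "pal_factors (u @ [c]) = pal_factors u \<union> ?N" using sub by blast
  ultimately show ?thesis
    by (metis card_Un_le le_trans add_le_mono1 Suc_eq_plus1 add.commute le_refl add_le_mono)
qed

lemma card_app_right: "card (pal_factors (u @ r)) \<le> card (pal_factors u) + length r"
proof (induction r rule: rev_induct)
  case Nil then show ?case by simp
next
  case (snoc c r)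
  have "card (pal_factors ((u @ r) @ [c])) \<le> Suc (card (pal_factors (u @ r)))" by (rule card_snoc)
  then show ?case using snoc by simp
qed

lemma card_app_left: "card (pal_factors (l @ u)) \<le> card (pal_factors u) + length l"
proof -
  have "card (pal_factors (rev u @ rev l)) \<le> card (pal_factors (rev u)) + length (rev l)"
    by (rule card_app_right)
  then show ?thesis by (metis pal_rev rev_append length_rev)
qed

lemma card_factor: "card (pal_factors (l @ u @ r)) \<le> card (pal_factors u) + length l + length r"
  using card_app_left[of l "u @ r"] card_app_right[of u r] by simp

lemma card_le_length: "card (pal_factors u) \<le> length u"
  using card_app_right[of "[]" u] by (simp add: pal_nil)

lemma defect:
  assumes "\<And>s. s \<noteq> [] \<Longrightarrow> suffix s (u @ [c]) \<Longrightarrow> rev s = s \<Longrightarrow> sublist s u"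
  shows "card (pal_factors (u @ [c])) < length (u @ [c])"
proof -
  have "pal_factors (u @ [c]) \<subseteq> pal_factors u"
    using assms by (auto simp: pal_factors_def sublist_snoc)
  then have "card (pal_factors (u @ [c])) \<le> card (pal_factors u)"
    by (simp add: card_mono pal_finite)
  then show ?thesis using card_le_length[of u] by simp
qed

lemma nonrich_factor:
  assumes "card (pal_factors u) < length u"
  shows "\<not> rich (l @ u @ r)"
  using card_factor[of l u r] assms by (simp add: rich_def)

lemma rep_eq:
  assumes "x \<noteq> y" "replicate m x @ y # s = replicate n x @ y # t"
  shows "m = n \<and> s = t"
  using assms
proof (induction m arbitrary: n)
  case 0 then show ?case by (cases n) auto
next
  case (Suc m) then show ?case by (cases n) auto
qed

lemma suffix_rep: "suffix s (replicate n x) \<Longrightarrow> \<exists>m\<le>n. s = replicate m x"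
proof -
  assume "suffix s (replicate n x)"
  then obtain z where z: "replicate n x = z @ s" by (auto simp: suffix_def)
  then have "set s \<subseteq> set (replicate n x)" by simp
  then have "set s \<subseteq> {x}" by (auto simp: set_replicate_conv_if split: if_splits)
  then have "s = replicate (length s) x" by (metis replicate_length_same singletonD subset_iff)
  moreover have "length s \<le> n" using z by (metis le_add2 length_append length_replicate)
  ultimately show ?thesis by blast
qed

lemma hd_last_pal: "rev s = s \<Longrightarrow> s \<noteq> [] \<Longrightarrow> hd s = last s"
  by (metis hd_rev)

lemma pal_suffixes:
  assumes xy: "x \<noteq> y" and B: "B \<ge> 1" and C: "C \<ge> 1" and D: "D \<ge> 1" and CE: "C < E"
    and BD: "B \<noteq> D"
    and s: "s \<noteq> []" "suffix s (replicate A x @ replicate B y @ replicate C x @ replicate D y @ replicate E x)"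
    and pal: "rev s = s"
  shows "\<exists>e\<le>E. s = replicate e x"
proof -
  obtain B' where B': "B = Suc B'" using B by (cases B) auto
  obtain C' where C': "C = Suc C'" using C by (cases C) auto
  obtain D' where D': "D = Suc D'" using D by (cases D) auto
  obtain E' where E': "E = Suc E'" using CE by (cases E) auto
  have hl: "hd s = last s" using hd_last_pal[OF pal s(1)] .
  from s(2) consider
      (c5) "suffix s (replicate E x)"
    | (c4) s' where "s = s' @ replicate E x" "suffix s' (replicate D y)"
    | (c3) s' where "s = s' @ replicate D y @ replicate E x" "suffix s' (replicate C x)"
    | (c2) s' where "s = s' @ replicate C x @ replicate D y @ replicate E x" "suffix s' (replicate B y)"
    | (c1) s' where "s = s' @ replicate B y @ replicate C x @ replicate D y @ replicate E x" "suffix s' (replicate A x)"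
  proof -
    let ?X5 = "replicate E x" and ?X4 = "replicate D y" and ?X3 = "replicate C x"
      and ?X2 = "replicate B y" and ?X1 = "replicate A x"
    have "suffix s (?X1 @ (?X2 @ ?X3 @ ?X4 @ ?X5))" using s(2) by simp
    then consider "suffix s (?X2 @ (?X3 @ ?X4 @ ?X5))" | "\<exists>s'. s = s' @ ?X2 @ ?X3 @ ?X4 @ ?X5 \<and> suffix s' ?X1"
      unfolding suffix_append by blast
    then show ?thesis
    proof cases
      case 1
      then consider "suffix s (?X3 @ (?X4 @ ?X5))" | "\<exists>s'. s = s' @ ?X3 @ ?X4 @ ?X5 \<and> suffix s' ?X2"
        unfolding suffix_append by blast
      then show ?thesis
      proof cases
        case 1
        then consider "suffix s (?X4 @ ?X5)" | "\<exists>s'. s = s' @ ?X4 @ ?X5 \<and> suffix s' ?X3"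
          unfolding suffix_append by blast
        then show ?thesis
        proof cases
          case 1
          then consider "suffix s ?X5" | "\<exists>s'. s = s' @ ?X5 \<and> suffix s' ?X4"
            unfolding suffix_append by blast
          then show ?thesis using that by blast
        qed (use that in blast)
      qed (use that in blast)
    qed (use that in blast)
  qed
  then show ?thesis
  proof cases
    case c5 then show ?thesis using suffix_rep[of s E x] by blast
  next
    case (c4 s')
    then obtain d where d: "d \<le> D" "s' = replicate d y" using suffix_rep[of s' D y] by blast
    show ?thesis
    proof (cases d)
      case 0 then show ?thesis using c4 d by (intro exI[of _ E]) simp
    next
      case (Suc d')
      then have "hd s = y" "last s = x" using c4 d E' by auto
      then show ?thesis using hl xy by simp
    qed
  next
    case (c3 s')
    then obtain c where c: "c \<le> C" "s' = replicate c x" using suffix_rep[of s' C x] by blast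
    show ?thesis
    proof (cases c)
      case 0
      then have "hd s = y" "last s = x" using c3 c E' D' by auto
      then show ?thesis using hl xy by simp
    next
      case (Suc c')
      have "rev s = replicate E x @ replicate D y @ replicate c x" using c3 c by simp
      then have "replicate E x @ y # (replicate D' y @ replicate c x) = replicate c x @ y # (replicate D' y @ replicate E x)"
        using pal c3 c D' by simp
      then have "E = c" using rep_eq[OF xy] by blast
      then show ?thesis using c CE by simp
    qed
  next
    case (c2 s')
    then obtain b where b: "b \<le> B" "s' = replicate b y" using suffix_rep[of s' B y] by blast
    show ?thesis
    proof (cases b)
      case 0
      have "rev s = replicate E x @ replicate D y @ replicate C x" using c2 b 0 by simp
      then have "replicate E x @ y # (replicate D' y @ replicate C x) = replicate C x @ y # (replicate D' y @ replicate E x)"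
        using pal c2 b 0 D' by simp
      then have "E = C" using rep_eq[OF xy] by blast
      then show ?thesis using CE by simp
    next
      case (Suc b')
      then have "hd s = y" "last s = x" using c2 b E' by auto
      then show ?thesis using hl xy by simp
    qed
  next
    case (c1 s')
    then obtain a where a: "a \<le> A" "s' = replicate a x" using suffix_rep[of s' A x] by blast
    have "rev s = replicate E x @ replicate D y @ replicate C x @ replicate B y @ replicate a x" using c1 a by simp
    then have "replicate E x @ y # (replicate D' y @ replicate C x @ replicate B y @ replicate a x)
       = replicate a x @ y # (replicate B' y @ replicate C x @ replicate D y @ replicate E x)"
      using pal c1 a D' B' by simp
    then have "replicate D' y @ replicate C x @ replicate B y @ replicate a x
       = replicate B' y @ replicate C x @ replicate D y @ replicate E x" using rep_eq[OF xy] by blast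
    then have "replicate D' y @ x # (replicate C' x @ replicate B y @ replicate a x)
       = replicate B' y @ x # (replicate C' x @ replicate D y @ replicate E x)" using C' by simp
    then have "D' = B'" using rep_eq xy by metis
    then show ?thesis using BD B' D' by simp
  qed
qed

lemma shape_aux:
  assumes xy: "x \<noteq> y" and B: "B \<ge> 1" and C: "C \<ge> 1" and D: "D \<ge> 1" and CE: "C < E"
    and BD: "B \<noteq> D" and EA: "E \<le> A"
  shows "card (pal_factors (replicate A x @ replicate B y @ replicate C x @ replicate D y @ replicate E x))
    < length (replicate A x @ replicate B y @ replicate C x @ replicate D y @ replicate E x)"
proof -
  obtain E' where E': "E = Suc E'" using CE by (cases E) auto
  let ?u0 = "replicate A x @ replicate B y @ replicate C x @ replicate D y @ replicate E' x"
  have eq: "replicate A x @ replicate B y @ replicate C x @ replicate D y @ replicate E x = ?u0 @ [x]"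
    using E' by (simp add: replicate_append_same)
  have "card (pal_factors (?u0 @ [x])) < length (?u0 @ [x])"
  proof (rule defect)
    fix s assume s: "s \<noteq> []" "suffix s (?u0 @ [x])" "rev s = s"
    then obtain e where e: "e \<le> E" "s = replicate e x"
      using pal_suffixes[OF xy B C D CE BD s(1) _ s(3), of A] eq by metis
    have "replicate A x = replicate e x @ replicate (A - e) x"
      using e EA by (simp add: replicate_add[symmetric])
    then have "prefix s ?u0" using e by (simp add: prefix_def)
    then show "sublist s ?u0" by simp
  qed
  then show ?thesis using eq by simp
qed

lemma shape_nonrich:
  assumes xy: "x \<noteq> y" and B: "B \<ge> 1" and C: "C \<ge> 1" and D: "D \<ge> 1" and CE: "C < E"
    and BD: "B \<noteq> D" and CA: "C < A"
  shows "card (pal_factors (replicate A x @ replicate B y @ replicate C x @ replicate D y @ replicate E x))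
    < length (replicate A x @ replicate B y @ replicate C x @ replicate D y @ replicate E x)"
proof (cases "E \<le> A")
  case True then show ?thesis using shape_aux[OF xy B C D CE BD] by blast
next
  case False
  then have "card (pal_factors (replicate E x @ replicate D y @ replicate C x @ replicate B y @ replicate A x))
    < length (replicate E x @ replicate D y @ replicate C x @ replicate B y @ replicate A x)"
    using shape_aux[OF xy D C B CA] BD by simp
  moreover have "rev (replicate A x @ replicate B y @ replicate C x @ replicate D y @ replicate E x)
     = replicate E x @ replicate D y @ replicate C x @ replicate B y @ replicate A x" by simp
  ultimately show ?thesis by (metis pal_rev length_rev)
qed

lemma peel:
  "w \<noteq> [] \<Longrightarrow> \<exists>n rest. n \<ge> 1 \<and> w = replicate n (hd w) @ rest \<and> (rest \<noteq> [] \<longrightarrow> hd rest \<noteq> hd w)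
     \<and> length (remdups_adj w) = Suc (length (remdups_adj rest))"
proof (induction w)
  case Nil then show ?case by simp
next
  case (Cons c t)
  note IH = Cons.IH
  show ?case
  proof (cases t)
    case Nil then show ?thesis by (intro exI[of _ 1] exI[of _ "[]"]) simp
  next
    case (Cons d t')
    note td = this
    show ?thesis
    proof (cases "c = d")
      case True
      have "t \<noteq> []" using td by simp
      from IH[OF this] obtain n rest where nr: "n \<ge> 1" "t = replicate n (hd t) @ rest"
        "rest \<noteq> [] \<longrightarrow> hd rest \<noteq> hd t" "length (remdups_adj t) = Suc (length (remdups_adj rest))"
        by blast
      have ht: "hd t = c" using td True by simp
      have e1: "c # t = replicate (Suc n) c @ rest" using nr(2) ht by (metis replicate_Suc append_Cons)
      have e2: "remdups_adj (c # t) = remdups_adj t" using td True by simp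
      have "Suc n \<ge> 1 \<and> c # t = replicate (Suc n) (hd (c # t)) @ rest \<and> (rest \<noteq> [] \<longrightarrow> hd rest \<noteq> hd (c # t))
        \<and> length (remdups_adj (c # t)) = Suc (length (remdups_adj rest))"
        using e1 e2 nr(3,4) ht by simp
      then show ?thesis by blast
    next
      case False
      then show ?thesis using td by (intro exI[of _ 1] exI[of _ t]) simp
    qed
  qed
qed

lemma peel2:
  assumes "set w \<subseteq> {x, y}" "x \<noteq> y" "w \<noteq> []" "hd w = x"
  shows "\<exists>n rest. n \<ge> 1 \<and> w = replicate n x @ rest \<and> set rest \<subseteq> {x, y} \<and> (rest \<noteq> [] \<longrightarrow> hd rest = y)
     \<and> length (remdups_adj w) = Suc (length (remdups_adj rest))"
proof -
  obtain n rest where nr: "n \<ge> 1" "w = replicate n (hd w) @ rest" "rest \<noteq> [] \<longrightarrow> hd rest \<noteq> hd w"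
     "length (remdups_adj w) = Suc (length (remdups_adj rest))" using peel[OF assms(3)] by blast
  have sr: "set rest \<subseteq> {x, y}" using nr(2) assms(1) by (metis Un_subset_iff set_append)
  have "rest \<noteq> [] \<longrightarrow> hd rest = y" using sr nr(3) assms(4) by (auto dest!: hd_in_set)
  then show ?thesis using nr sr assms(4) by blast
qed

lemma construct:
  assumes xy: "x \<noteq> y" and pos: "n0 \<ge> 1" "n1 \<ge> 1" "n2 \<ge> 1" "n3 \<ge> 1" "n4 \<ge> 1" "n5 \<ge> 1" "n6 \<ge> 1" "n7 \<ge> 1" "n8 \<ge> 1"
    and w: "w = replicate n0 x @ replicate n1 y @ replicate n2 x @ replicate n3 y @ replicate n4 x @
       replicate n5 y @ replicate n6 x @ replicate n7 y @ replicate n8 x @ Z"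
  shows "\<exists>v \<in> block_reversal w. \<not> rich v"
proof -
  obtain m4 where m4: "n4 = Suc m4" using pos by (cases n4) auto
  obtain m7 where m7: "n7 = Suc m7" using pos by (cases n7) auto
  define Bs where "Bs = [replicate n0 x @ replicate n1 y, replicate n2 x, replicate n3 y @ replicate m4 x,
     x # replicate n5 y, replicate n6 x @ [y], replicate m7 y @ replicate n8 x] @ (if Z = [] then [] else [Z])"
  have cw: "concat Bs = w"
    using w m4 m7 by (simp add: Bs_def replicate_append_same)
  have ne: "\<forall>B\<in>set Bs. B \<noteq> []" using pos by (auto simp: Bs_def)
  have v: "concat (rev Bs) = (Z @ replicate m7 y) @
     (replicate (n8 + n6) x @ replicate 1 y @ replicate 1 x @ replicate (n5 + n3) y @ replicate (m4 + n2 + n0) x)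
     @ replicate n1 y"
    by (simp add: Bs_def replicate_add)
  have "card (pal_factors (replicate (n8 + n6) x @ replicate 1 y @ replicate 1 x @ replicate (n5 + n3) y @ replicate (m4 + n2 + n0) x))
    < length (replicate (n8 + n6) x @ replicate 1 y @ replicate 1 x @ replicate (n5 + n3) y @ replicate (m4 + n2 + n0) x)"
    by (rule shape_nonrich[OF xy]) (use pos in auto)
  then have "\<not> rich (concat (rev Bs))" unfolding v by (rule nonrich_factor)
  moreover have "Bs \<noteq> []" by (simp add: Bs_def)
  then have "concat (rev Bs) \<in> block_reversal w"
    unfolding block_reversal_def using cw ne by blast
  ultimately show ?thesis by blast
qed

lemma runs9:
  assumes xy: "x \<noteq> y" and s: "set w \<subseteq> {x, y}" and h: "w \<noteq> []" "hd w = x"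
    and r: "length (remdups_adj w) \<ge> 9"
  obtains n0 n1 n2 n3 n4 n5 n6 n7 n8 Z where
    "n0 \<ge> 1" "n1 \<ge> 1" "n2 \<ge> 1" "n3 \<ge> 1" "n4 \<ge> 1" "n5 \<ge> 1" "n6 \<ge> 1" "n7 \<ge> 1" "n8 \<ge> 1"
    "w = replicate n0 x @ replicate n1 y @ replicate n2 x @ replicate n3 y @ replicate n4 x @
       replicate n5 y @ replicate n6 x @ replicate n7 y @ replicate n8 x @ Z"
proof -
  have yx: "y \<noteq> x" using xy by simp
  have sy: "set v \<subseteq> {y, x}" if "set v \<subseteq> {x, y}" for v using that by auto
  have sx: "set v \<subseteq> {x, y}" if "set v \<subseteq> {y, x}" for v using that by auto
  have nn: "v \<noteq> []" if "length (remdups_adj v) \<ge> 1" for v :: "'a list" using that by auto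
  obtain n0 w1 where a0: "n0 \<ge> 1" "w = replicate n0 x @ w1" "set w1 \<subseteq> {x, y}" "w1 \<noteq> [] \<longrightarrow> hd w1 = y"
    "length (remdups_adj w) = Suc (length (remdups_adj w1))" using peel2[OF s xy h] by blast
  have "w1 \<noteq> []" using a0(5) r nn[of w1] by simp
  obtain n1 w2 where a1: "n1 \<ge> 1" "w1 = replicate n1 y @ w2" "set w2 \<subseteq> {y, x}" "w2 \<noteq> [] \<longrightarrow> hd w2 = x"
    "length (remdups_adj w1) = Suc (length (remdups_adj w2))"
    using peel2[OF sy[OF a0(3)] yx \<open>w1 \<noteq> []\<close>] a0(4) \<open>w1 \<noteq> []\<close> by blast
  have "w2 \<noteq> []" using a0(5) a1(5) r nn[of w2] by simp
  obtain n2 w3 where a2: "n2 \<ge> 1" "w2 = replicate n2 x @ w3" "set w3 \<subseteq> {x, y}" "w3 \<noteq> [] \<longrightarrow> hd w3 = y"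
    "length (remdups_adj w2) = Suc (length (remdups_adj w3))"
    using peel2[OF sx[OF a1(3)] xy \<open>w2 \<noteq> []\<close>] a1(4) \<open>w2 \<noteq> []\<close> by blast
  have "w3 \<noteq> []" using a0(5) a1(5) a2(5) r nn[of w3] by simp
  obtain n3 w4 where a3: "n3 \<ge> 1" "w3 = replicate n3 y @ w4" "set w4 \<subseteq> {y, x}" "w4 \<noteq> [] \<longrightarrow> hd w4 = x"
    "length (remdups_adj w3) = Suc (length (remdups_adj w4))"
    using peel2[OF sy[OF a2(3)] yx \<open>w3 \<noteq> []\<close>] a2(4) \<open>w3 \<noteq> []\<close> by blast
  have "w4 \<noteq> []" using a0(5) a1(5) a2(5) a3(5) r nn[of w4] by simp
  obtain n4 w5 where a4: "n4 \<ge> 1" "w4 = replicate n4 x @ w5" "set w5 \<subseteq> {x, y}" "w5 \<noteq> [] \<longrightarrow> hd w5 = y"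
    "length (remdups_adj w4) = Suc (length (remdups_adj w5))"
    using peel2[OF sx[OF a3(3)] xy \<open>w4 \<noteq> []\<close>] a3(4) \<open>w4 \<noteq> []\<close> by blast
  have "w5 \<noteq> []" using a0(5) a1(5) a2(5) a3(5) a4(5) r nn[of w5] by simp
  obtain n5 w6 where a5: "n5 \<ge> 1" "w5 = replicate n5 y @ w6" "set w6 \<subseteq> {y, x}" "w6 \<noteq> [] \<longrightarrow> hd w6 = x"
    "length (remdups_adj w5) = Suc (length (remdups_adj w6))"
    using peel2[OF sy[OF a4(3)] yx \<open>w5 \<noteq> []\<close>] a4(4) \<open>w5 \<noteq> []\<close> by blast
  have "w6 \<noteq> []" using a0(5) a1(5) a2(5) a3(5) a4(5) a5(5) r nn[of w6] by simp
  obtain n6 w7 where a6: "n6 \<ge> 1" "w6 = replicate n6 x @ w7" "set w7 \<subseteq> {x, y}" "w7 \<noteq> [] \<longrightarrow> hd w7 = y"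
    "length (remdups_adj w6) = Suc (length (remdups_adj w7))"
    using peel2[OF sx[OF a5(3)] xy \<open>w6 \<noteq> []\<close>] a5(4) \<open>w6 \<noteq> []\<close> by blast
  have "w7 \<noteq> []" using a0(5) a1(5) a2(5) a3(5) a4(5) a5(5) a6(5) r nn[of w7] by simp
  obtain n7 w8 where a7: "n7 \<ge> 1" "w7 = replicate n7 y @ w8" "set w8 \<subseteq> {y, x}" "w8 \<noteq> [] \<longrightarrow> hd w8 = x"
    "length (remdups_adj w7) = Suc (length (remdups_adj w8))"
    using peel2[OF sy[OF a6(3)] yx \<open>w7 \<noteq> []\<close>] a6(4) \<open>w7 \<noteq> []\<close> by blast
  have "w8 \<noteq> []" using a0(5) a1(5) a2(5) a3(5) a4(5) a5(5) a6(5) a7(5) r nn[of w8] by simp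
  obtain n8 Z where a8: "n8 \<ge> 1" "w8 = replicate n8 x @ Z"
    using peel2[OF sx[OF a7(3)] xy \<open>w8 \<noteq> []\<close>] a7(4) \<open>w8 \<noteq> []\<close> by blast
  show thesis
    by (rule that[OF a0(1) a1(1) a2(1) a3(1) a4(1) a5(1) a6(1) a7(1) a8(1)])
       (simp add: a0(2) a1(2) a2(2) a3(2) a4(2) a5(2) a6(2) a7(2) a8(2))
qed

theorem mainTheorem7:
  fixes a b :: 'a and w :: "'a list"
  assumes "a \<noteq> b"
    and "set w \<subseteq> {a, b}"
    and "run_length w \<ge> 9"
  shows "\<exists>v \<in> block_reversal w. \<not> rich v"
proof -
  have r: "length (remdups_adj w) \<ge> 9" using assms(3) by (simp add: run_length_def)
  then have ne: "w \<noteq> []" by auto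
  define x where "x = hd w"
  define y where "y = (if x = a then b else a)"
  have xin: "x \<in> {a, b}" using ne assms(2) x_def hd_in_set by blast
  have xy: "x \<noteq> y" using assms(1) by (simp add: y_def)
  have s: "set w \<subseteq> {x, y}" using assms(1,2) xin by (auto simp: y_def)
  obtain n0 n1 n2 n3 n4 n5 n6 n7 n8 Z where
    "n0 \<ge> 1" "n1 \<ge> 1" "n2 \<ge> 1" "n3 \<ge> 1" "n4 \<ge> 1" "n5 \<ge> 1" "n6 \<ge> 1" "n7 \<ge> 1" "n8 \<ge> 1"
    "w = replicate n0 x @ replicate n1 y @ replicate n2 x @ replicate n3 y @ replicate n4 x @
       replicate n5 y @ replicate n6 x @ replicate n7 y @ replicate n8 x @ Z"
    by (rule runs9[OF xy s ne x_def[symmetric] r])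
  then show ?thesis by (rule construct[OF xy])
qed

end
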